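(* There exists a natural number $n_0$ such that for every natural number $n\ge n_0$ there exists a self-adjoint projection $E\in M_n(\mathbb{C})$ such that $3n^{-1/2}(2E-I)$ is not an element of the closed convex hull $\mathcal{C}$ of the set $\{R\circ C: R,C\in M_n(\mathbb{C}),\ \|R\|_r\le1,\ \|C\|_c\le1\}$.
   Context: $R\circ C$ is the entrywise Schur product $(r_{ij}c_{ij})$; $I$ is the identity matrix. $\|R\|_r:=\max_i(\sum_j|r_{ij}|^2)^{1/2}$ and $\|C\|_c:=\max_j(\sum_i|c_{ij}|^2)^{1/2}$. *)

theory Defs
  imports "Jordan_Normal_Form.Schur_Decomposition"
begin

definition schur_prod :: "complex mat \<Rightarrow> complex mat \<Rightarrow> complex mat" where
  "schur_prod R C = mat (dim_row R) (dim_col R) (\<lambda>(i,j). R $$ (i,j) * C $$ (i,j))"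

definition row_norm :: "complex mat \<Rightarrow> real" where
  "row_norm R = Max (insert 0 ((\<lambda>i. sqrt (\<Sum>j<dim_col R. (cmod (R $$ (i,j)))\<^sup>2)) ` {..<dim_row R}))"

definition col_norm :: "complex mat \<Rightarrow> real" where
  "col_norm C = Max (insert 0 ((\<lambda>j. sqrt (\<Sum>i<dim_row C. (cmod (C $$ (i,j)))\<^sup>2)) ` {..<dim_col C}))"

definition schur_gen :: "nat \<Rightarrow> complex mat set" where
  "schur_gen n = {schur_prod R C | R C. R \<in> carrier_mat n n \<and> C \<in> carrier_mat n n
                     \<and> row_norm R \<le> 1 \<and> col_norm C \<le> 1}"

definition mat_convex_hull :: "nat \<Rightarrow> complex mat set \<Rightarrow> complex mat set" where
  "mat_convex_hull n S = {A. \<exists>(m::nat) (t::nat \<Rightarrow> real) (B::nat \<Rightarrow> complex mat).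
       (\<forall>k<m. t k \<ge> 0 \<and> B k \<in> S) \<and> (\<Sum>k<m. t k) = 1 \<and>
       A = mat n n (\<lambda>(i,j). \<Sum>k<m. complex_of_real (t k) * B k $$ (i,j))}"

text \<open>Frobenius (Euclidean) distance of n x n matrices; all norms on M_n(C) are equivalent.\<close>
definition mat_dist :: "nat \<Rightarrow> complex mat \<Rightarrow> complex mat \<Rightarrow> real" where
  "mat_dist n A B = sqrt (\<Sum>i<n. \<Sum>j<n. (cmod (A $$ (i,j) - B $$ (i,j)))\<^sup>2)"

definition mat_closure :: "nat \<Rightarrow> complex mat set \<Rightarrow> complex mat set" where
  "mat_closure n S = {A \<in> carrier_mat n n. \<forall>e>0. \<exists>B\<in>S. mat_dist n A B < e}"

definition closed_conv_schur :: "nat \<Rightarrow> complex mat set" where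
  "closed_conv_schur n = mat_closure n (mat_convex_hull n (schur_gen n))"

end

theory Submission
  imports Defs
begin


lemma div_one_aux:
  fixes x K :: nat assumes "x < 2*K" "K \<le> x" shows "x div K = 1"
proof -
  have K0: "K > 0" using assms by auto
  have "x div K < 2" using assms(1) by (simp add: less_mult_imp_div_less mult.commute)
  moreover have "K div K \<le> x div K" using assms(2) by (rule div_le_mono)
  ultimately show ?thesis using K0 by simp
qed

lemma sylvester:
  "\<exists>h::nat\<Rightarrow>nat\<Rightarrow>real. (\<forall>i j. h i j = h j i) \<and> (\<forall>i j. \<bar>h i j\<bar> = 1) \<and>
     (\<forall>i<2^m. \<forall>j<2^m. (\<Sum>k<2^m. h i k * h k j) = (if i = j then 2^m else 0))"
proof (induction m)
  case 0
  show ?case by (rule exI[of _ "\<lambda>i j. 1"]) auto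
next
  case (Suc m)
  then obtain h where hs: "\<forall>i j. h i j = h j i" and ha: "\<forall>i j. \<bar>h i j\<bar> = 1"
    and ho: "\<forall>i<(2::nat)^m. \<forall>j<(2::nat)^m. (\<Sum>k<(2::nat)^m. h i k * h k j) = (if i = j then (2::real)^m else 0)" by blast
  define K :: nat where "K = 2^m"
  have K0: "K > 0" by (simp add: K_def)
  define s :: "nat \<Rightarrow> real" where "s i = (if K \<le> i then -1 else 1)" for i
  define g where "g i j = h (i mod K) (j mod K) * (if K \<le> i \<and> K \<le> j then -1 else 1)" for i j
  have s2: "s i * s i = 1" for i by (simp add: s_def)
  show ?case
  proof (intro exI[of _ g] conjI allI impI)
    fix i j show "g i j = g j i" using hs by (auto simp: g_def)
  next
    fix i j show "\<bar>g i j\<bar> = 1" using ha by (auto simp: g_def abs_mult)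
  next
    fix i j :: nat assume i: "i < 2^Suc m" and j: "j < 2^Suc m"
    have split: "{..<2^Suc m} = {..<K} \<union> {K..<K+K}" by (auto simp: K_def)
    have e1: "(\<Sum>k<2^Suc m. g i k * g k j) = (\<Sum>k<K. g i k * g k j) + (\<Sum>k\<in>{K..<K+K}. g i k * g k j)"
      unfolding split by (rule sum.union_disjoint) auto
    have e2: "(\<Sum>k\<in>{K..<K+K}. g i k * g k j) = (\<Sum>k<K. g i (k+K) * g (k+K) j)"
      by (rule sum.reindex_bij_witness[of _ "\<lambda>k. k+K" "\<lambda>k. k-K"]) auto
    have e3: "(\<Sum>k<K. g i k * g k j) = (\<Sum>k<K. h (i mod K) k * h k (j mod K))"
      by (rule sum.cong) (auto simp: g_def)
    have e4: "(\<Sum>k<K. g i (k+K) * g (k+K) j) = s i * s j * (\<Sum>k<K. h (i mod K) k * h k (j mod K))"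
      unfolding sum_distrib_left by (rule sum.cong) (auto simp: g_def s_def)
    have e5: "(\<Sum>k<K. h (i mod K) k * h k (j mod K)) = (if i mod K = j mod K then K else 0)"
      using ho K0 by (simp add: K_def)
    have "(\<Sum>k<2^Suc m. g i k * g k j) = (1 + s i * s j) * (if i mod K = j mod K then K else 0)"
      unfolding e1 e2 e3 e4 e5 by (simp add: algebra_simps)
    also have "\<dots> = (if i = j then 2^Suc m else 0)"
    proof -
      have "i = j \<longleftrightarrow> i mod K = j mod K \<and> (K \<le> i \<longleftrightarrow> K \<le> j)"
      proof
        assume "i mod K = j mod K \<and> (K \<le> i \<longleftrightarrow> K \<le> j)"
        moreover have "i div K = (if K \<le> i then 1 else 0)" "j div K = (if K \<le> j then 1 else 0)"
        proof -
          have "i < 2*K" "j < 2*K" using i j by (auto simp: K_def)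
          then show "i div K = (if K \<le> i then 1 else 0)" "j div K = (if K \<le> j then 1 else 0)"
            using K0 by (auto simp: div_eq_0_iff div_one_aux)
        qed
        ultimately show "i = j" by (metis div_mult_mod_eq)
      qed auto
      then show ?thesis by (auto simp: s_def K_def)
    qed
    finally show "(\<Sum>k<2^Suc m. g i k * g k j) = (if i = j then 2^Suc m else 0)" .
  qed
qed
lemma sqrt_ineq_aux:
  fixes K m :: real assumes "0 \<le> m" "m \<le> K"
  shows "sqrt K + 5/2 * sqrt m \<le> 5/2 * sqrt (K + m)"
proof -
  define a where "a = sqrt K"
  define b where "b = sqrt m"
  have a0: "a \<ge> 0" and b0: "b \<ge> 0" using assms by (auto simp: a_def b_def)
  have ba: "b \<le> a" using assms by (simp add: a_def b_def)
  have Ka: "K = a^2" and mb: "m = b^2" using assms by (auto simp: a_def b_def)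
  have "(a + 5/2*b)^2 \<le> (5/2)^2 * (K + m)"
    unfolding Ka mb using a0 b0 ba
    by (simp add: power2_eq_square algebra_simps) (smt (verit) mult_mono mult_nonneg_nonneg)
  then have "sqrt ((a + 5/2*b)^2) \<le> sqrt ((5/2)^2 * (K + m))" by (rule real_sqrt_le_mono)
  then show ?thesis using a0 b0 by (simp add: real_sqrt_mult a_def b_def)
qed

lemma blocks:
  "\<exists>(y::nat\<Rightarrow>nat\<Rightarrow>real) (\<rho>::nat\<Rightarrow>real). (\<forall>i j. y i j = y j i) \<and>
     (\<forall>i<n. \<forall>j<n. (\<Sum>k<n. y i k * y k j) = (if i = j then 1 else 0)) \<and>
     (\<forall>i<n. \<forall>j<n. \<bar>y i j\<bar> \<le> \<rho> i \<and> \<rho> i \<le> 1) \<and>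
     (\<Sum>i<n. \<rho> i) \<le> 5/2 * sqrt (real n)"
proof (induction n rule: less_induct)
  case (less n)
  show ?case
  proof (cases "n = 0")
    case True
    then show ?thesis by (intro exI[of _ "\<lambda>i j. 0"] exI[of _ "\<lambda>i. 0"]) auto
  next
    case False
    then obtain M where M: "2^M \<le> n" "n < 2^(M+1)" using ex_power_ivl1[of 2 n] by auto
    define K :: nat where "K = 2^M"
    have K0: "K > 0" by (simp add: K_def)
    have Kn: "K \<le> n" "n - K \<le> K" "n - K < n" using M K0 by (auto simp: K_def)
    obtain y' \<rho>' where ys: "\<forall>i j. y' i j = y' j i"
      and yo: "\<forall>i<n-K. \<forall>j<n-K. (\<Sum>k<n-K. y' i k * y' k j) = (if i = j then 1 else 0)"
      and yb: "\<forall>i<n-K. \<forall>j<n-K. \<bar>y' i j\<bar> \<le> \<rho>' i \<and> \<rho>' i \<le> 1"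
      and yr: "(\<Sum>i<n-K. \<rho>' i) \<le> 5/2 * sqrt (real (n-K))"
      using less.IH[OF Kn(3)] by blast
    obtain h :: "nat\<Rightarrow>nat\<Rightarrow>real" where hs: "\<forall>i j. h i j = h j i" and ha: "\<forall>i j. \<bar>h i j\<bar> = 1"
      and ho: "\<forall>i<(2::nat)^M. \<forall>j<(2::nat)^M. (\<Sum>k<(2::nat)^M. h i k * h k j) = (if i = j then (2::real)^M else 0)"
      using sylvester[of M] by blast
    have hoK: "(\<Sum>k<K. h i k * h k j) = (if i = j then real K else 0)" if "i < K" "j < K" for i j
      using ho that by (simp add: K_def)
    define y where "y i j = (if i < K then (if j < K then h i j / sqrt K else 0)
                              else (if j < K then 0 else y' (i-K) (j-K)))" for i j
    define \<rho> where "\<rho> i = (if i < K then 1 / sqrt K else \<rho>' (i-K))" for i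
    have sK: "sqrt (real K) * sqrt (real K) = real K" by simp
    have sumsplit: "(\<Sum>k<n. f k) = (\<Sum>k<K. f k) + (\<Sum>k<n-K. f (k+K))" for f :: "nat \<Rightarrow> real"
    proof -
      have "{..<n} = {..<K} \<union> {K..<n}" using Kn by auto
      then have "(\<Sum>k<n. f k) = (\<Sum>k<K. f k) + (\<Sum>k\<in>{K..<n}. f k)"
        by (metis sum.union_disjoint finite_lessThan finite_atLeastLessThan ivl_disj_int(2) lessThan_atLeast0)
      also have "(\<Sum>k\<in>{K..<n}. f k) = (\<Sum>k<n-K. f (k+K))"
        by (rule sum.reindex_bij_witness[of _ "\<lambda>k. k+K" "\<lambda>k. k-K"]) auto
      finally show ?thesis .
    qed
    show ?thesis
    proof (intro exI[of _ y] exI[of _ \<rho>] conjI allI impI)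
      fix i j show "y i j = y j i" using hs ys by (simp add: y_def)
    next
      fix i j assume i: "i < n" and j: "j < n"
      show "(\<Sum>k<n. y i k * y k j) = (if i = j then 1 else 0)"
      proof (cases "i < K")
        case iK: True
        show ?thesis
        proof (cases "j < K")
          case True
          have "(\<Sum>k<K. y i k * y k j) = (\<Sum>k<K. h i k * h k j) / (sqrt K * sqrt K)"
            unfolding sum_divide_distrib by (rule sum.cong) (auto simp: y_def iK True)
          also have "\<dots> = (if i = j then 1 else 0)" using hoK[OF iK True] K0 by simp
          finally show ?thesis unfolding sumsplit using iK True by (simp add: y_def)
        next
          case False
          show ?thesis unfolding sumsplit using iK False by (simp add: y_def)
        qed
      next
        case iK: False
        show ?thesis
        proof (cases "j < K")
          case True
          show ?thesis unfolding sumsplit using iK True by (simp add: y_def)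
        next
          case False
          have "(\<Sum>k<n-K. y i (k+K) * y (k+K) j) = (\<Sum>k<n-K. y' (i-K) k * y' k (j-K))"
            by (rule sum.cong) (auto simp: y_def iK False)
          also have "\<dots> = (if i - K = j - K then 1 else 0)" using yo i j iK False by auto
          also have "\<dots> = (if i = j then 1 else 0)" using iK False by auto
          finally show ?thesis unfolding sumsplit using iK False by (simp add: y_def)
        qed
      qed
    next
      fix i j assume i: "i < n" and j: "j < n"
      have r0: "\<rho>' i' \<ge> 0" if "i' < n-K" for i' using yb that by (meson abs_ge_zero order_trans)
      show "\<bar>y i j\<bar> \<le> \<rho> i"
        using yb i j ha K0 r0[of "i-K"] by (auto simp: y_def \<rho>_def abs_div)
      show "\<rho> i \<le> 1"
      proof (cases "i < K")
        case False
        then have "i - K < n - K" using i by auto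
        then show ?thesis using yb False by (auto simp: \<rho>_def)
      qed (use K0 in \<open>auto simp: \<rho>_def\<close>)
    next
      have "(\<Sum>i<n. \<rho> i) = real K / sqrt K + (\<Sum>i<n-K. \<rho>' i)"
        unfolding sumsplit by (simp add: \<rho>_def)
      also have "real K / sqrt K = sqrt K" by (simp add: real_div_sqrt)
      finally have "(\<Sum>i<n. \<rho> i) \<le> sqrt K + 5/2 * sqrt (real (n-K))" using yr by simp
      also have "\<dots> \<le> 5/2 * sqrt (real K + real (n-K))"
        by (rule sqrt_ineq_aux) (use Kn in auto)
      also have "real K + real (n-K) = real n" using Kn by simp
      finally show "(\<Sum>i<n. \<rho> i) \<le> 5/2 * sqrt (real n)" .
    qed
  qed
qed



lemma row_sum_le:
  assumes "R \<in> carrier_mat n n" "row_norm R \<le> 1" "i < n"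
  shows "(\<Sum>j<n. (cmod (R $$ (i,j)))\<^sup>2) \<le> 1"
proof -
  let ?S = "insert 0 ((\<lambda>i. sqrt (\<Sum>j<dim_col R. (cmod (R $$ (i,j)))\<^sup>2)) ` {..<dim_row R})"
  have "sqrt (\<Sum>j<n. (cmod (R $$ (i,j)))\<^sup>2) \<in> ?S" using assms by auto
  then have "sqrt (\<Sum>j<n. (cmod (R $$ (i,j)))\<^sup>2) \<le> Max ?S" by (intro Max_ge) auto
  then have "sqrt (\<Sum>j<n. (cmod (R $$ (i,j)))\<^sup>2) \<le> 1" using assms(2) unfolding row_norm_def by linarith
  then show ?thesis by simp
qed

lemma col_sum_le:
  assumes "C \<in> carrier_mat n n" "col_norm C \<le> 1" "j < n"
  shows "(\<Sum>i<n. (cmod (C $$ (i,j)))\<^sup>2) \<le> 1"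
proof -
  let ?S = "insert 0 ((\<lambda>j. sqrt (\<Sum>i<dim_row C. (cmod (C $$ (i,j)))\<^sup>2)) ` {..<dim_col C})"
  have "sqrt (\<Sum>i<n. (cmod (C $$ (i,j)))\<^sup>2) \<in> ?S" using assms by auto
  then have "sqrt (\<Sum>i<n. (cmod (C $$ (i,j)))\<^sup>2) \<le> Max ?S" by (intro Max_ge) auto
  then have "sqrt (\<Sum>i<n. (cmod (C $$ (i,j)))\<^sup>2) \<le> 1" using assms(2) unfolding col_norm_def by linarith
  then show ?thesis by simp
qed

lemma entry_le_dist:
  assumes "i < n" "j < n"
  shows "cmod (A $$ (i,j) - B $$ (i,j)) \<le> mat_dist n A B"
proof -
  let ?f = "\<lambda>i j. (cmod (A $$ (i,j) - B $$ (i,j)))\<^sup>2"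
  have "?f i j \<le> (\<Sum>j'<n. ?f i j')" using assms by (intro member_le_sum) auto
  also have "\<dots> \<le> (\<Sum>i'<n. \<Sum>j'<n. ?f i' j')" using assms
    by (intro member_le_sum[of i "{..<n}" "\<lambda>i'. \<Sum>j'<n. ?f i' j'"]) (auto intro: sum_nonneg)
  finally have "sqrt (?f i j) \<le> mat_dist n A B" unfolding mat_dist_def by (rule real_sqrt_le_mono)
  then show ?thesis by simp
qed

lemma gen_bound:
  fixes y :: "nat \<Rightarrow> nat \<Rightarrow> real"
  assumes ys: "\<forall>i j. y i j = y j i"
    and yb: "\<forall>i<n. \<forall>j<n. \<bar>y i j\<bar> \<le> \<rho> i"
    and X: "X \<in> schur_gen n"
  shows "(\<Sum>i<n. \<Sum>j<n. Re (X $$ (i,j)) * y i j) \<le> (\<Sum>i<n. \<rho> i)"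
proof -
  obtain R C where X: "X = schur_prod R C" and R: "R \<in> carrier_mat n n" and C: "C \<in> carrier_mat n n"
    and rn: "row_norm R \<le> 1" and cn: "col_norm C \<le> 1" using X unfolding schur_gen_def by blast
  have r0: "\<rho> i \<ge> 0" if "i < n" for i using yb that by (meson abs_ge_zero order_trans)
  let ?r = "\<lambda>i j. (cmod (R $$ (i,j)))\<^sup>2" and ?c = "\<lambda>i j. (cmod (C $$ (i,j)))\<^sup>2"
  have pt: "Re (X $$ (i,j)) * y i j \<le> \<bar>y i j\<bar> * ?r i j / 2 + \<bar>y i j\<bar> * ?c i j / 2"
    if "i < n" "j < n" for i j
  proof -
    have "X $$ (i,j) = R $$ (i,j) * C $$ (i,j)" using that R unfolding X schur_prod_def by (simp add: carrier_matD)
    then have cm: "cmod (X $$ (i,j)) = cmod (R $$ (i,j)) * cmod (C $$ (i,j))" by (metis norm_mult)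
    have "Re (X $$ (i,j)) * y i j \<le> \<bar>Re (X $$ (i,j))\<bar> * \<bar>y i j\<bar>"
      by (metis abs_ge_self abs_mult)
    also have "\<dots> \<le> cmod (X $$ (i,j)) * \<bar>y i j\<bar>"
      by (intro mult_right_mono abs_Re_le_cmod) auto
    also have "\<dots> = cmod (R $$ (i,j)) * cmod (C $$ (i,j)) * \<bar>y i j\<bar>" using cm by simp
    also have "cmod (R $$ (i,j)) * cmod (C $$ (i,j)) \<le> ?r i j / 2 + ?c i j / 2"
    proof -
      have "0 \<le> (cmod (R $$ (i,j)) - cmod (C $$ (i,j)))^2" by simp
      then show ?thesis unfolding power2_diff by linarith
    qed
    then have "cmod (R $$ (i,j)) * cmod (C $$ (i,j)) * \<bar>y i j\<bar> \<le> (?r i j / 2 + ?c i j / 2) * \<bar>y i j\<bar>"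
      by (rule mult_right_mono) simp
    finally show ?thesis by (simp add: algebra_simps)
  qed
  have s1: "(\<Sum>i<n. \<Sum>j<n. \<bar>y i j\<bar> * ?r i j) \<le> (\<Sum>i<n. \<rho> i)"
  proof (rule sum_mono)
    fix i assume i: "i \<in> {..<n}"
    have "(\<Sum>j<n. \<bar>y i j\<bar> * ?r i j) \<le> (\<Sum>j<n. \<rho> i * ?r i j)"
      using yb i by (intro sum_mono mult_right_mono) auto
    also have "\<dots> = \<rho> i * (\<Sum>j<n. ?r i j)" by (simp add: sum_distrib_left)
    also have "\<dots> \<le> \<rho> i * 1" using row_sum_le[OF R rn] i r0 by (intro mult_left_mono) auto
    finally show "(\<Sum>j<n. \<bar>y i j\<bar> * ?r i j) \<le> \<rho> i" by simp
  qed
  have sw: "(\<Sum>i<n. \<Sum>j<n. \<bar>y i j\<bar> * ?c i j) = (\<Sum>j<n. \<Sum>i<n. \<bar>y i j\<bar> * ?c i j)"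
    by (rule sum.swap)
  have s2: "(\<Sum>i<n. \<Sum>j<n. \<bar>y i j\<bar> * ?c i j) \<le> (\<Sum>i<n. \<rho> i)"
    unfolding sw
  proof (rule sum_mono)
    fix j assume j: "j \<in> {..<n}"
    have "(\<Sum>i<n. \<bar>y i j\<bar> * ?c i j) \<le> (\<Sum>i<n. \<rho> j * ?c i j)"
    proof (intro sum_mono mult_right_mono)
      fix i assume i: "i \<in> {..<n}"
      have "\<bar>y i j\<bar> = \<bar>y j i\<bar>" using ys by simp
      also have "\<dots> \<le> \<rho> j" using yb i j by simp
      finally show "\<bar>y i j\<bar> \<le> \<rho> j" .
    qed simp
    also have "\<dots> = \<rho> j * (\<Sum>i<n. ?c i j)" by (simp add: sum_distrib_left)
    also have "\<dots> \<le> \<rho> j * 1" using col_sum_le[OF C cn] j r0 by (intro mult_left_mono) auto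
    finally show "(\<Sum>i<n. \<bar>y i j\<bar> * ?c i j) \<le> \<rho> j" by simp
  qed
  have "(\<Sum>i<n. \<Sum>j<n. Re (X $$ (i,j)) * y i j) \<le>
        (\<Sum>i<n. \<Sum>j<n. \<bar>y i j\<bar> * ?r i j / 2 + \<bar>y i j\<bar> * ?c i j / 2)"
    using pt by (intro sum_mono) auto
  also have "\<dots> = (\<Sum>i<n. \<Sum>j<n. \<bar>y i j\<bar> * ?r i j) / 2 + (\<Sum>i<n. \<Sum>j<n. \<bar>y i j\<bar> * ?c i j) / 2"
    by (simp add: sum.distrib sum_divide_distrib)
  also have "\<dots> \<le> (\<Sum>i<n. \<rho> i)" using s1 s2 by simp
  finally show ?thesis .
qed



lemma hull_bound:
  fixes y :: "nat \<Rightarrow> nat \<Rightarrow> real"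
  assumes ys: "\<forall>i j. y i j = y j i"
    and yb: "\<forall>i<n. \<forall>j<n. \<bar>y i j\<bar> \<le> \<rho> i"
    and X: "X \<in> mat_convex_hull n (schur_gen n)"
  shows "(\<Sum>i<n. \<Sum>j<n. Re (X $$ (i,j)) * y i j) \<le> (\<Sum>i<n. \<rho> i)"
proof -
  obtain m :: nat and t :: "nat \<Rightarrow> real" and B :: "nat \<Rightarrow> complex mat" where tB: "\<forall>k<m. t k \<ge> 0 \<and> B k \<in> schur_gen n" and t1: "(\<Sum>k<m. t k) = 1"
    and XB: "X = mat n n (\<lambda>(i,j). \<Sum>k<m. complex_of_real (t k) * B k $$ (i,j))"
    using X unfolding mat_convex_hull_def by blast
  have "(\<Sum>i<n. \<Sum>j<n. Re (X $$ (i,j)) * y i j) =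
        (\<Sum>i<n. \<Sum>j<n. \<Sum>k<m. t k * (Re (B k $$ (i,j)) * y i j))"
    by (intro sum.cong refl) (simp add: XB Re_sum sum_distrib_left sum_distrib_right mult.left_commute mult.commute)
  also have "\<dots> = (\<Sum>k<m. t k * (\<Sum>i<n. \<Sum>j<n. Re (B k $$ (i,j)) * y i j))"
  proof -
    have "(\<Sum>i<n. \<Sum>j<n. \<Sum>k<m. t k * (Re (B k $$ (i,j)) * y i j)) =
          (\<Sum>i<n. \<Sum>k<m. \<Sum>j<n. t k * (Re (B k $$ (i,j)) * y i j))"
      by (intro sum.cong refl sum.swap)
    also have "\<dots> = (\<Sum>k<m. \<Sum>i<n. \<Sum>j<n. t k * (Re (B k $$ (i,j)) * y i j))"
      by (rule sum.swap)
    finally show ?thesis by (simp add: sum_distrib_left)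
  qed
  also have "\<dots> \<le> (\<Sum>k<m. t k * (\<Sum>i<n. \<rho> i))"
    using tB gen_bound[OF ys yb] by (intro sum_mono[of "{..<m}"] mult_left_mono) auto
  also have "\<dots> = (\<Sum>i<n. \<rho> i)" using t1 by (simp add: sum_distrib_right[symmetric])
  finally show ?thesis .
qed



lemma sep:
  fixes y :: "nat \<Rightarrow> nat \<Rightarrow> real"
  assumes n0: "n > 0"
    and ys: "\<forall>i j. y i j = y j i"
    and yo: "\<forall>i<n. \<forall>j<n. (\<Sum>k<n. y i k * y k j) = (if i = j then 1 else 0)"
    and yb: "\<forall>i<n. \<forall>j<n. \<bar>y i j\<bar> \<le> \<rho> i \<and> \<rho> i \<le> 1"
    and rs: "(\<Sum>i<n. \<rho> i) < 3 * sqrt (real n)"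
  shows "mat n n (\<lambda>(i,j). complex_of_real (3 / sqrt (real n) * y i j)) \<notin> closed_conv_schur n"
proof
  define A where "A = mat n n (\<lambda>(i,j). complex_of_real (3 / sqrt (real n) * y i j))"
  assume "mat n n (\<lambda>(i,j). complex_of_real (3 / sqrt (real n) * y i j)) \<in> closed_conv_schur n"
  then have Acl: "A \<in> mat_closure n (mat_convex_hull n (schur_gen n))"
    unfolding A_def closed_conv_schur_def .
  define S where "S = (\<Sum>i<n. \<rho> i)"
  define \<delta> where "\<delta> = 3 * sqrt (real n) - S"
  have d0: "\<delta> > 0" using rs by (simp add: \<delta>_def S_def)
  define e where "e = \<delta> / (real n * real n + 1)"
  have nn: "real n * real n + 1 > 0" by (smt (verit) mult_nonneg_nonneg of_nat_0_le_iff)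
  have e0: "e > 0" using d0 nn unfolding e_def by (intro divide_pos_pos) auto
  obtain B where B: "B \<in> mat_convex_hull n (schur_gen n)" and dB: "mat_dist n A B < e"
    using Acl e0 unfolding mat_closure_def by blast
  have yb': "\<forall>i<n. \<forall>j<n. \<bar>y i j\<bar> \<le> \<rho> i" using yb by blast
  have phiB: "(\<Sum>i<n. \<Sum>j<n. Re (B $$ (i,j)) * y i j) \<le> S"
    using hull_bound[OF ys yb' B] by (simp add: S_def)
  have rowone: "(\<Sum>j<n. y i j * y i j) = 1" if "i < n" for i
  proof -
    have "(\<Sum>j<n. y i j * y i j) = (\<Sum>j<n. y i j * y j i)" using ys by simp
    also have "\<dots> = 1" using yo that by simp
    finally show ?thesis .
  qed
  have phiA: "(\<Sum>i<n. \<Sum>j<n. Re (A $$ (i,j)) * y i j) = 3 * sqrt (real n)"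
  proof -
    have "(\<Sum>i<n. \<Sum>j<n. Re (A $$ (i,j)) * y i j) = (\<Sum>i<n. 3 / sqrt (real n) * (\<Sum>j<n. y i j * y i j))"
      by (intro sum.cong refl) (simp add: A_def sum_distrib_left mult.assoc)
    also have "\<dots> = (\<Sum>i<n. 3 / sqrt (real n))" using rowone by simp
    also have "\<dots> = real n * 3 / sqrt (real n)" by simp
    also have "\<dots> = 3 * sqrt (real n)" using n0
      by (metis mult.commute real_div_sqrt of_nat_0_le_iff times_divide_eq_right)
    finally show ?thesis .
  qed
  have diff: "(\<Sum>i<n. \<Sum>j<n. Re (A $$ (i,j)) * y i j) - (\<Sum>i<n. \<Sum>j<n. Re (B $$ (i,j)) * y i j)
      \<le> (\<Sum>i<n. \<Sum>j<n. mat_dist n A B)"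
  proof -
    have "(\<Sum>i<n. \<Sum>j<n. Re (A $$ (i,j)) * y i j) - (\<Sum>i<n. \<Sum>j<n. Re (B $$ (i,j)) * y i j)
        = (\<Sum>i<n. \<Sum>j<n. Re (A $$ (i,j) - B $$ (i,j)) * y i j)"
      by (simp add: sum_subtractf[symmetric] algebra_simps)
    also have "\<dots> \<le> (\<Sum>i<n. \<Sum>j<n. mat_dist n A B)"
    proof (intro sum_mono)
      fix i j assume i: "i \<in> {..<n}" and j: "j \<in> {..<n}"
      have y1: "\<bar>y i j\<bar> \<le> 1" using yb i j by (meson lessThan_iff order_trans)
      have "Re (A $$ (i,j) - B $$ (i,j)) * y i j \<le> \<bar>Re (A $$ (i,j) - B $$ (i,j))\<bar> * \<bar>y i j\<bar>"
        by (metis abs_ge_self abs_mult)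
      also have "\<dots> \<le> cmod (A $$ (i,j) - B $$ (i,j)) * 1"
        using y1 by (intro mult_mono abs_Re_le_cmod) auto
      also have "\<dots> \<le> mat_dist n A B" using entry_le_dist i j by simp
      finally show "Re (A $$ (i,j) - B $$ (i,j)) * y i j \<le> mat_dist n A B" .
    qed
    finally show ?thesis .
  qed
  have "(\<Sum>i<n. \<Sum>j<n. mat_dist n A B) = real n * real n * mat_dist n A B" by simp
  also have "\<dots> \<le> real n * real n * e" using dB by (intro mult_left_mono) auto
  also have "\<dots> < \<delta>"
  proof -
    have "real n * real n * e = \<delta> * (real n * real n / (real n * real n + 1))"
      by (simp add: e_def field_simps)
    also have "\<dots> < \<delta> * 1" using d0 nn by (intro mult_strict_left_mono) (auto simp: divide_less_eq)
    finally show ?thesis by simp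
  qed
  finally have "3 * sqrt (real n) - S < \<delta>" using diff phiA phiB by linarith
  then show False by (simp add: \<delta>_def)
qed



lemma adj_E:
  fixes y :: "nat \<Rightarrow> nat \<Rightarrow> real" and n :: nat
  assumes ys: "\<forall>i j. y i j = y j i"
  defines "E \<equiv> mat n n (\<lambda>(i,j). complex_of_real ((y i j + (if i = j then 1 else 0)) / 2))"
  shows "mat_adjoint E = E"
  by (rule eq_matI) (auto simp: E_def mat_adjoint_def mat_of_rows_def cols_def ys)

lemma delta_sum1: "i < (n::nat) \<Longrightarrow> (\<Sum>k<n. (if i = k then 1 else 0) * f k) = (f i :: real)"
proof -
  assume i: "i < n"
  have "(\<Sum>k<n. (if i = k then 1 else 0) * f k) = (\<Sum>k<n. if k = i then f k else 0)"
    by (rule sum.cong) auto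
  also have "\<dots> = f i" using i by simp
  finally show ?thesis .
qed

lemma delta_sum2: "j < (n::nat) \<Longrightarrow> (\<Sum>k<n. f k * (if k = j then 1 else 0)) = (f j :: real)"
proof -
  assume j: "j < n"
  have "(\<Sum>k<n. f k * (if k = j then 1 else 0)) = (\<Sum>k<n. if k = j then f k else 0)"
    by (rule sum.cong) auto
  also have "\<dots> = f j" using j by simp
  finally show ?thesis .
qed

lemma idem_E:
  fixes y :: "nat \<Rightarrow> nat \<Rightarrow> real" and n :: nat
  assumes yo: "\<forall>i<n. \<forall>j<n. (\<Sum>k<n. y i k * y k j) = (if i = j then 1 else 0)"
  defines "E \<equiv> mat n n (\<lambda>(i,j). complex_of_real ((y i j + (if i = j then 1 else 0)) / 2))"
  shows "E * E = E"
proof (rule eq_matI)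
  fix i j assume i: "i < dim_row E" and j: "j < dim_col E"
  then have i: "i < n" and j: "j < n" by (auto simp: E_def)
  let ?d = "\<lambda>i j. (if i = j then 1 else 0) :: real"
  have "(E * E) $$ (i,j) = (\<Sum>k<n. complex_of_real ((y i k + ?d i k) / 2 * ((y k j + ?d k j) / 2)))"
    using i j by (simp add: E_def scalar_prod_def lessThan_atLeast0 of_real_mult)
  also have "\<dots> = complex_of_real (\<Sum>k<n. (y i k * y k j + y i k * ?d k j + ?d i k * y k j + ?d i k * ?d k j) / 4)"
    by (simp add: algebra_simps add_divide_distrib)
  also have "(\<Sum>k<n. (y i k * y k j + y i k * ?d k j + ?d i k * y k j + ?d i k * ?d k j) / 4)
      = ((\<Sum>k<n. y i k * y k j) + (\<Sum>k<n. y i k * ?d k j) + (\<Sum>k<n. ?d i k * y k j) + (\<Sum>k<n. ?d i k * ?d k j)) / 4"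
    by (simp only: sum.distrib[symmetric] sum_divide_distrib)
  also have "(\<Sum>k<n. y i k * ?d k j) = y i j" using j by (rule delta_sum2)
  also have "(\<Sum>k<n. ?d i k * y k j) = y i j" using i by (rule delta_sum1)
  also have "(\<Sum>k<n. ?d i k * ?d k j) = ?d i j" using i by (rule delta_sum1)
  also have "(\<Sum>k<n. y i k * y k j) = ?d i j" using yo i j by simp
  finally have X: "(E * E) $$ (i,j) = complex_of_real ((?d i j + y i j + y i j + ?d i j) / 4)" .
  have Eij: "E $$ (i,j) = complex_of_real ((y i j + ?d i j) / 2)" using i j by (simp add: E_def)
  have "(?d i j + y i j + y i j + ?d i j) / 4 = (y i j + ?d i j) / 2" by simp
  then show "(E * E) $$ (i,j) = E $$ (i,j)" using X Eij by metis
qed (auto simp: E_def)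

lemma A_E:
  fixes y :: "nat \<Rightarrow> nat \<Rightarrow> real" and n :: nat
  defines "E \<equiv> mat n n (\<lambda>(i,j). complex_of_real ((y i j + (if i = j then 1 else 0)) / 2))"
  shows "complex_of_real c \<cdot>\<^sub>m (2 \<cdot>\<^sub>m E - 1\<^sub>m n) = mat n n (\<lambda>(i,j). complex_of_real (c * y i j))"
  by (rule eq_matI) (auto simp: E_def field_simps)


theorem mainTheorem6:
  shows "\<exists>n0::nat. \<forall>n\<ge>n0. \<exists>E::complex mat.
           E \<in> carrier_mat n n \<and> mat_adjoint E = E \<and> E * E = E \<and>
           complex_of_real (3 / sqrt (real n)) \<cdot>\<^sub>m (2 \<cdot>\<^sub>m E - 1\<^sub>m n)
             \<notin> closed_conv_schur n"
proof (intro exI[of _ "1::nat"] allI impI)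
  fix n :: nat assume n: "n \<ge> 1"
  obtain y :: "nat \<Rightarrow> nat \<Rightarrow> real" and \<rho> :: "nat \<Rightarrow> real" where ys: "\<forall>i j. y i j = y j i"
    and yo: "\<forall>i<n. \<forall>j<n. (\<Sum>k<n. y i k * y k j) = (if i = j then 1 else 0)"
    and yb: "\<forall>i<n. \<forall>j<n. \<bar>y i j\<bar> \<le> \<rho> i \<and> \<rho> i \<le> 1"
    and yr: "(\<Sum>i<n. \<rho> i) \<le> 5/2 * sqrt (real n)"
    using blocks[of n] by blast
  have sp: "sqrt (real n) > 0" using n by simp
  have rs: "(\<Sum>i<n. \<rho> i) < 3 * sqrt (real n)" using yr sp by linarith
  define E where "E = mat n n (\<lambda>(i,j). complex_of_real ((y i j + (if i = j then 1 else 0)) / 2))"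
  have "complex_of_real (3 / sqrt (real n)) \<cdot>\<^sub>m (2 \<cdot>\<^sub>m E - 1\<^sub>m n)
      = mat n n (\<lambda>(i,j). complex_of_real (3 / sqrt (real n) * y i j))"
    unfolding E_def by (rule A_E)
  moreover have "mat n n (\<lambda>(i,j). complex_of_real (3 / sqrt (real n) * y i j)) \<notin> closed_conv_schur n"
    using n by (intro sep[OF _ ys yo yb rs]) auto
  moreover have "E \<in> carrier_mat n n" by (simp add: E_def)
  moreover have "mat_adjoint E = E" unfolding E_def using ys by (rule adj_E)
  moreover have "E * E = E" unfolding E_def using yo by (rule idem_E)
  ultimately show "\<exists>E::complex mat.
           E \<in> carrier_mat n n \<and> mat_adjoint E = E \<and> E * E = E \<and>
           complex_of_real (3 / sqrt (real n)) \<cdot>\<^sub>m (2 \<cdot>\<^sub>m E - 1\<^sub>m n)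
             \<notin> closed_conv_schur n" by metis
qed

end
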